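(* Let $\mathcal S=(\mathcal P,\mathcal L)$ be a linear space with $v$ points and constant line size $k$, $2<k<v$; let $G\le\mathrm{Aut}(\mathcal S)$ be transitive on lines, and let $\mathfrak C$ be a non-trivial $G$-invariant partition of $\mathcal P$ with $d$ classes of size $c$; let $C\in\mathfrak C$ and let $G^C$ be the permutation group induced on $C$ by its setwise stabiliser $G_C$. (i) If $G^C$ is $3$-homogeneous, then $\mathrm{spec}\,\mathcal S=\{1,2\}$. (ii) If $G^C$ is $2$-homogeneous, then $\mathrm{spec}\,\mathcal S=\{1,h\}$ for some $h\ge2$.
   Context: A linear space: a finite set $\mathcal P$ of points and a set $\mathcal L$ of subsets (lines) such that any two distinct points lie on exactly one line and each line has at least two points. For a line $\lambda$ and $i\ge0$, $d_i$ is the number of classes $C\in\mathfrak C$ with $|C\cap\lambda|=i$ (independent of $\lambda$); $\mathrm{spec}\,\mathcal S=\{i>0:d_i\ne0\}$. A permutation group is $t$-homogeneous if it is transitive on $t$-element subsets. *)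

theory Defs
  imports "HOL-Combinatorics.Permutations"
begin

definition linear_space :: "'a set \<Rightarrow> 'a set set \<Rightarrow> bool" where
  "linear_space P L \<longleftrightarrow> finite P \<and>
     (\<forall>l\<in>L. l \<subseteq> P \<and> 2 \<le> card l) \<and>
     (\<forall>x\<in>P. \<forall>y\<in>P. x \<noteq> y \<longrightarrow> (\<exists>!l. l \<in> L \<and> x \<in> l \<and> y \<in> l))"

definition automorphism :: "'a set \<Rightarrow> 'a set set \<Rightarrow> ('a \<Rightarrow> 'a) \<Rightarrow> bool" where
  "automorphism P L g \<longleftrightarrow> g permutes P \<and> (image g) ` L = L"

definition perm_group :: "'a set \<Rightarrow> ('a \<Rightarrow> 'a) set \<Rightarrow> bool" where
  "perm_group P G \<longleftrightarrow> (\<forall>g\<in>G. g permutes P) \<and> id \<in> G \<and>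
     (\<forall>g\<in>G. \<forall>h\<in>G. g \<circ> h \<in> G) \<and> (\<forall>g\<in>G. inv g \<in> G)"

definition line_transitive :: "'a set set \<Rightarrow> ('a \<Rightarrow> 'a) set \<Rightarrow> bool" where
  "line_transitive L G \<longleftrightarrow> (\<forall>l1\<in>L. \<forall>l2\<in>L. \<exists>g\<in>G. g ` l1 = l2)"

definition is_partition :: "'a set \<Rightarrow> 'a set set \<Rightarrow> bool" where
  "is_partition P \<C> \<longleftrightarrow> \<Union>\<C> = P \<and> {} \<notin> \<C> \<and>
     (\<forall>C1\<in>\<C>. \<forall>C2\<in>\<C>. C1 \<noteq> C2 \<longrightarrow> C1 \<inter> C2 = {})"

definition G_invariant :: "('a \<Rightarrow> 'a) set \<Rightarrow> 'a set set \<Rightarrow> bool" where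
  "G_invariant G \<C> \<longleftrightarrow> (\<forall>g\<in>G. \<forall>C\<in>\<C>. g ` C \<in> \<C>)"

definition induced_group :: "('a \<Rightarrow> 'a) set \<Rightarrow> 'a set \<Rightarrow> ('a \<Rightarrow> 'a) set" where
  "induced_group G C = (\<lambda>g. restrict g C) ` {g \<in> G. g ` C = C}"

definition homogeneous :: "nat \<Rightarrow> ('a \<Rightarrow> 'a) set \<Rightarrow> 'a set \<Rightarrow> bool" where
  "homogeneous t H X \<longleftrightarrow>
     (\<forall>S T. S \<subseteq> X \<and> T \<subseteq> X \<and> card S = t \<and> card T = t \<longrightarrow> (\<exists>h\<in>H. h ` S = T))"

definition d_num :: "'a set set \<Rightarrow> 'a set \<Rightarrow> nat \<Rightarrow> nat" where
  "d_num \<C> ln i = card {C \<in> \<C>. card (C \<inter> ln) = i}"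

definition spec :: "'a set set \<Rightarrow> 'a set \<Rightarrow> nat set" where
  "spec \<C> ln = {i. 0 < i \<and> d_num \<C> ln i \<noteq> 0}"

end

theory Submission
  imports Defs
begin


locale LS =
  fixes P :: "'a set" and L :: "'a set set" and k :: nat
  assumes lin: "linear_space P L" and lk: "\<forall>l\<in>L. card l = k"
    and k2: "2 < k" and kv: "k < card P"
begin

lemma finP: "finite P" using lin unfolding linear_space_def by blast
lemma line_sub: "l \<in> L \<Longrightarrow> l \<subseteq> P" using lin unfolding linear_space_def by blast
lemma fin_line: "l \<in> L \<Longrightarrow> finite l" using line_sub finP finite_subset by blast
lemma finL: "finite L"
proof -
  have "L \<subseteq> Pow P" using line_sub by blast
  then show ?thesis using finP by (meson finite_Pow_iff finite_subset)
qed
lemma line_exists: "x \<in> P \<Longrightarrow> y \<in> P \<Longrightarrow> x \<noteq> y \<Longrightarrow> \<exists>l\<in>L. x \<in> l \<and> y \<in> l"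
  using lin unfolding linear_space_def by blast
lemma line_uniq: "l1 \<in> L \<Longrightarrow> l2 \<in> L \<Longrightarrow> x \<in> l1 \<Longrightarrow> y \<in> l1 \<Longrightarrow> x \<in> l2 \<Longrightarrow> y \<in> l2
   \<Longrightarrow> x \<noteq> y \<Longrightarrow> l1 = l2"
proof -
  assume a: "l1 \<in> L" "l2 \<in> L" "x \<in> l1" "y \<in> l1" "x \<in> l2" "y \<in> l2" "x \<noteq> y"
  then have "x \<in> P" "y \<in> P" using line_sub by auto
  then have "\<exists>!l. l \<in> L \<and> x \<in> l \<and> y \<in> l" using lin a(7) unfolding linear_space_def by blast
  then show "l1 = l2" using a by blast
qed

definition lt :: "'a \<Rightarrow> 'a set set" where "lt x = {l\<in>L. x \<in> l}"

lemma fin_lt: "finite (lt x)" unfolding lt_def using finL by simp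

lemma part:
  assumes "x \<in> P" "A \<subseteq> P" "x \<notin> A"
  shows "card A = (\<Sum>l\<in>lt x. card (l \<inter> A))"
proof -
  have eq: "A = (\<Union>l\<in>lt x. l \<inter> A)"
  proof
    show "A \<subseteq> (\<Union>l\<in>lt x. l \<inter> A)"
    proof
      fix a assume a: "a \<in> A"
      then have "a \<noteq> x" "a \<in> P" using assms by auto
      then obtain l where "l \<in> L" "x \<in> l" "a \<in> l" using line_exists assms by metis
      then show "a \<in> (\<Union>l\<in>lt x. l \<inter> A)" using a unfolding lt_def by blast
    qed
  qed blast
  have "card (\<Union>l\<in>lt x. l \<inter> A) = (\<Sum>l\<in>lt x. card (l \<inter> A))"
  proof (rule card_UN_disjoint)
    show "finite (lt x)" by (rule fin_lt)
    show "\<forall>l\<in>lt x. finite (l \<inter> A)" unfolding lt_def using fin_line by blast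
    show "\<forall>l1\<in>lt x. \<forall>l2\<in>lt x. l1 \<noteq> l2 \<longrightarrow> l1 \<inter> A \<inter> (l2 \<inter> A) = {}"
      unfolding lt_def using line_uniq assms(3) by blast
  qed
  with eq show ?thesis by simp
qed

lemma r_eq: assumes "x \<in> P" shows "card P - 1 = card (lt x) * (k - 1)"
proof -
  have "card (P - {x}) = (\<Sum>l\<in>lt x. card (l \<inter> (P - {x})))"
    using part[of x "P - {x}"] assms by blast
  also have "\<dots> = (\<Sum>l\<in>lt x. k - 1)"
  proof (rule sum.cong)
    fix l assume "l \<in> lt x"
    then have "l \<in> L" "x \<in> l" unfolding lt_def by auto
    then have "l \<inter> (P - {x}) = l - {x}" using line_sub by blast
    then show "card (l \<inter> (P - {x})) = k - 1" using \<open>l \<in> L\<close> \<open>x \<in> l\<close> lk fin_line by simp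
  qed simp
  finally show ?thesis using assms finP by simp
qed

lemma r_const: "x \<in> P \<Longrightarrow> y \<in> P \<Longrightarrow> card (lt x) = card (lt y)"
proof -
  assume "x \<in> P" "y \<in> P"
  then have "card (lt x) * (k - 1) = card (lt y) * (k - 1)" using r_eq by metis
  moreover have "k - 1 > 0" using k2 by simp
  ultimately show "card (lt x) = card (lt y)" using k2 by simp
qed

lemma r_ge2: assumes "x \<in> P" shows "2 \<le> card (lt x)"
proof -
  have "card P - 1 > k - 1" using kv k2 by linarith
  then have "card (lt x) * (k - 1) > 1 * (k - 1)" using r_eq[OF assms] by simp
  then have "card (lt x) > 1" by (meson mult_less_cancel2)
  then show ?thesis by simp
qed

lemma avoid: assumes "x \<in> P" shows "\<exists>l\<in>L. x \<notin> l"
proof -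
  have "card P \<ge> 2" using kv k2 by simp
  then have "card (P - {x}) \<ge> 1" using assms finP by simp
  then have "P - {x} \<noteq> {}" by force
  then obtain y where y: "y \<in> P" "y \<noteq> x" by blast
  then obtain l where l: "l \<in> L" "x \<in> l" "y \<in> l" using line_exists assms by metis
  have "card l < card P" using lk l kv by simp
  have "\<not> P \<subseteq> l"
  proof
    assume "P \<subseteq> l"
    then have "card P \<le> card l" by (rule card_mono[OF fin_line[OF l(1)]])
    with \<open>card l < card P\<close> show False by simp
  qed
  then obtain z where z: "z \<in> P" "z \<notin> l" by blast
  have "z \<noteq> y" using z l by blast
  then obtain m where m: "m \<in> L" "z \<in> m" "y \<in> m" using line_exists z y by metis
  have "x \<notin> m"
  proof
    assume "x \<in> m"
    then have "m = l" using line_uniq[OF m(1) l(1), of x y] l m y by blast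
    then show False using z m by blast
  qed
  then show ?thesis using m by blast
qed

lemma r_ge_k: assumes "x \<in> P" shows "k \<le> card (lt x)"
proof -
  obtain l where l: "l \<in> L" "x \<notin> l" using avoid assms by blast
  define f where "f y = (SOME m. m \<in> L \<and> x \<in> m \<and> y \<in> m)" for y
  have f: "f y \<in> L \<and> x \<in> f y \<and> y \<in> f y" if "y \<in> l" for y
  proof -
    have "y \<in> P" "y \<noteq> x" using that l line_sub by auto
    then have "\<exists>m. m \<in> L \<and> x \<in> m \<and> y \<in> m" using line_exists assms by metis
    then show ?thesis unfolding f_def by (rule someI_ex)
  qed
  have "inj_on f l"
  proof
    fix y1 y2 assume y: "y1 \<in> l" "y2 \<in> l" "f y1 = f y2"
    show "y1 = y2"
    proof (rule ccontr)
      assume "y1 \<noteq> y2"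
      then have "f y1 = l" using line_uniq[of "f y1" l y1 y2] f y l by metis
      then show False using f y l by metis
    qed
  qed
  moreover have "f ` l \<subseteq> lt x" using f unfolding lt_def by blast
  ultimately have "card l \<le> card (lt x)" using fin_lt by (metis card_inj_on_le)
  then show ?thesis using lk l by simp
qed

lemma flags: "(\<Sum>l\<in>L. card l) = (\<Sum>x\<in>P. card (lt x))"
proof -
  have "(\<Sum>l\<in>L. card l) = (\<Sum>l\<in>L. \<Sum>x\<in>P. if x \<in> l then 1 else 0)"
  proof (rule sum.cong)
    fix l assume "l \<in> L"
    then have "l \<subseteq> P" by (rule line_sub)
    then have "P \<inter> l = l" by blast
    have "(\<Sum>x\<in>P. if x \<in> l then 1 else (0::nat)) = card (P \<inter> {x. x \<in> l})"
      using finP by (simp add: sum.If_cases)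
    then show "card l = (\<Sum>x\<in>P. if x \<in> l then 1 else 0)" using \<open>P \<inter> l = l\<close> by simp
  qed simp
  also have "\<dots> = (\<Sum>x\<in>P. \<Sum>l\<in>L. if x \<in> l then 1 else 0)" by (rule sum.swap)
  also have "\<dots> = (\<Sum>x\<in>P. card (lt x))"
  proof (rule sum.cong)
    fix x assume "x \<in> P"
    have "(\<Sum>l\<in>L. if x \<in> l then 1 else (0::nat)) = card (L \<inter> {l. x \<in> l})"
      using finL by (simp add: sum.If_cases)
    moreover have "L \<inter> {l. x \<in> l} = lt x" unfolding lt_def by blast
    ultimately show "(\<Sum>l\<in>L. if x \<in> l then 1 else 0) = card (lt x)" by simp
  qed simp
  finally show ?thesis .
qed

lemma b_ge_v: "card P \<le> card L"
proof -
  have "card L * k = (\<Sum>l\<in>L. card l)" using lk by simp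
  also have "\<dots> = (\<Sum>x\<in>P. card (lt x))" by (rule flags)
  also have "\<dots> \<ge> (\<Sum>x\<in>P. k)" by (rule sum_mono) (rule r_ge_k)
  finally have "card P * k \<le> card L * k" by simp
  then show ?thesis using k2 by simp
qed

end


lemma arith_no1:
  fixes r h k c d v :: nat
  assumes "k \<le> r" "2 \<le> h" "2 * h \<le> k" "c - 1 = r * (h - 1)" "v - 1 = r * (k - 1)"
    "v = c * d" "1 \<le> c" "1 \<le> d"
  shows False
proof -
  have c: "c = r * (h - 1) + 1" using assms by simp
  have v: "v = r * (k - 1) + 1" 
  proof -
    have "v \<ge> 1" using assms(6,7,8) by simp
    then show ?thesis using assms(5) by linarith
  qed
  have "c * (d - 1) = c * d - c" by (simp add: diff_mult_distrib2)
  also have "\<dots> = r * (k - 1) - r * (h - 1)" using c v assms(6) by simp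
  also have "\<dots> = r * (k - h)" using assms(2,3) by (simp add: diff_mult_distrib2[symmetric])
  finally have dv: "c dvd r * (k - h)" by (metis dvd_triv_left)
  have "gcd r c = 1" using c gcd_add_mult[of r "h - 1" 1] by (simp add: mult.commute)
  then have "coprime c r" by (simp add: coprime_iff_gcd_eq_1 gcd.commute)
  then have "c dvd (k - h)" using dv coprime_dvd_mult_right_iff by blast
  moreover have "k - h > 0" using assms by simp
  ultimately have "c \<le> k - h" by (simp add: dvd_imp_le)
  moreover have "c \<ge> r + 1" using c assms(2) by (simp add: nat_mult_le_cancel_disj, linarith)
  ultimately show False using assms(1) by simp
qed

lemma arith_r1:
  fixes r m u :: nat
  assumes "2 \<le> r" "1 \<le> m" "u = r * m" "u - 1 = r * (m - 1)"
  shows False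
proof -
  have "r * (m - 1) = r * m - r" by (simp add: diff_mult_distrib2)
  moreover have "r * m \<ge> r" using assms by simp
  ultimately show False using assms by linarith
qed



lemma two_pts: assumes "2 \<le> card A" shows "\<exists>a b. a \<in> A \<and> b \<in> A \<and> a \<noteq> b"
proof -
  obtain T where "T \<subseteq> A" "card T = 2" using obtain_subset_with_card_n[OF assms] by blast
  then obtain a b where "T = {a, b}" "a \<noteq> b" unfolding card_2_iff by blast
  then show ?thesis using \<open>T \<subseteq> A\<close> by blast
qed

locale LS2 = LS P L k for P :: "'a set" and L k +
  fixes G :: "('a \<Rightarrow> 'a) set" and Cl :: "'a set set" and C :: "'a set" and c d :: nat
  assumes grp: "perm_group P G" and aut: "\<forall>g\<in>G. automorphism P L g"
    and ltr: "line_transitive L G" and partn: "is_partition P Cl"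
    and ginv: "G_invariant G Cl" and cd: "card Cl = d" and cc: "\<forall>D\<in>Cl. card D = c"
    and c1: "1 < c" and d1: "1 < d" and CC: "C \<in> Cl"
begin

lemma g_perm: "g \<in> G \<Longrightarrow> g permutes P" using grp unfolding perm_group_def by blast
lemma g_inj: "g \<in> G \<Longrightarrow> inj g" using g_perm permutes_inj by blast
lemma g_surj: "g \<in> G \<Longrightarrow> surj g" using g_perm permutes_surj by blast
lemma g_line: "g \<in> G \<Longrightarrow> l \<in> L \<Longrightarrow> g ` l \<in> L"
  using aut unfolding automorphism_def by blast
lemma g_cls: "g \<in> G \<Longrightarrow> D \<in> Cl \<Longrightarrow> g ` D \<in> Cl"
  using ginv unfolding G_invariant_def by blast
lemma g_inv: "g \<in> G \<Longrightarrow> inv g \<in> G" using grp unfolding perm_group_def by blast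
lemma id_G: "id \<in> G" using grp unfolding perm_group_def by blast
lemma g_comp: "g \<in> G \<Longrightarrow> h \<in> G \<Longrightarrow> g \<circ> h \<in> G" using grp unfolding perm_group_def by blast
lemma card_img: "g \<in> G \<Longrightarrow> card (g ` A) = card A"
  using g_inj by (meson card_image inj_on_subset subset_UNIV)
lemma img_int: "g \<in> G \<Longrightarrow> g ` (A \<inter> B) = g ` A \<inter> g ` B"
  using g_inj by (simp add: image_Int)

lemma cls_sub: "D \<in> Cl \<Longrightarrow> D \<subseteq> P" using partn unfolding is_partition_def by blast
lemma fin_cls: "D \<in> Cl \<Longrightarrow> finite D" using cls_sub finP finite_subset by blast
lemma finCl: "finite Cl"
proof -
  have "Cl \<subseteq> Pow P" using cls_sub by blast
  then show ?thesis using finP by (meson finite_Pow_iff finite_subset)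
qed
lemma cls_disj: "D1 \<in> Cl \<Longrightarrow> D2 \<in> Cl \<Longrightarrow> x \<in> D1 \<Longrightarrow> x \<in> D2 \<Longrightarrow> D1 = D2"
  using partn unfolding is_partition_def by blast
lemma cls_cover: "x \<in> P \<Longrightarrow> \<exists>D\<in>Cl. x \<in> D" using partn unfolding is_partition_def by blast
lemma cls_two: assumes "D \<in> Cl" shows "\<exists>a b. a \<in> D \<and> b \<in> D \<and> a \<noteq> b"
proof -
  have "2 \<le> card D" using cc c1 assms by simp
  then show ?thesis by (rule two_pts)
qed

lemma spec_iff: "i \<in> spec Cl l \<longleftrightarrow> 0 < i \<and> (\<exists>D\<in>Cl. card (D \<inter> l) = i)"
proof -
  have "finite {D \<in> Cl. card (D \<inter> l) = i}" using finCl by simp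
  then show ?thesis unfolding spec_def d_num_def by (auto simp: card_gt_0_iff)
qed

lemma v_eq: "card P = c * d"
proof -
  have "P = \<Union>Cl" using partn unfolding is_partition_def by blast
  moreover have "card (\<Union>Cl) = sum card Cl"
  proof (rule card_Union_disjoint)
    show "pairwise disjnt Cl" unfolding pairwise_def disjnt_def using partn
      unfolding is_partition_def by blast
  qed (rule fin_cls)
  moreover have "sum card Cl = d * c" using cc cd by simp
  ultimately show ?thesis by simp
qed

lemma transfer:
  assumes "l1 \<in> L" "l2 \<in> L" "D \<in> Cl"
  shows "\<exists>D'\<in>Cl. card (D' \<inter> l2) = card (D \<inter> l1)"
proof -
  obtain g where g: "g \<in> G" "g ` l1 = l2" using ltr assms unfolding line_transitive_def by blast
  have "g ` D \<in> Cl" using g_cls g assms by blast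
  moreover have "card (g ` D \<inter> l2) = card (D \<inter> l1)"
    using g img_int[of g D l1] card_img[of g "D \<inter> l1"] by simp
  ultimately show ?thesis by blast
qed

lemma orbit: assumes "D \<in> Cl" shows "\<exists>g\<in>G. g ` C = D"
proof -
  define U where "U = (\<Union>g\<in>G. g ` C)"
  have UP: "U \<subseteq> P"
  proof
    fix y assume "y \<in> U"
    then obtain g where g: "g \<in> G" "y \<in> g ` C" unfolding U_def by blast
    have "g ` C \<in> Cl" using g_cls[OF g(1) CC] .
    then show "y \<in> P" using cls_sub g(2) by blast
  qed
  have Ug: "g x \<in> U" if gG: "g \<in> G" and xU: "x \<in> U" for g x
  proof -
    obtain h where "h \<in> G" "x \<in> h ` C" using xU unfolding U_def by blast
    then have "g x \<in> (g \<circ> h) ` C" by auto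
    then show ?thesis unfolding U_def using g_comp[OF gG \<open>h \<in> G\<close>] by blast
  qed
  have le: "card (l1 \<inter> U) \<le> card (l2 \<inter> U)" if l12: "l1 \<in> L" "l2 \<in> L" for l1 l2
  proof -
    obtain g where g: "g \<in> G" "g ` l1 = l2" using ltr l12 unfolding line_transitive_def by blast
    have "g ` (l1 \<inter> U) \<subseteq> l2 \<inter> U" using g Ug by blast
    then have "card (g ` (l1 \<inter> U)) \<le> card (l2 \<inter> U)"
      using fin_line[OF l12(2)] card_mono[of "l2 \<inter> U"] by simp
    then show ?thesis using card_img[OF g(1)] by simp
  qed
  have PU: "P \<subseteq> U"
  proof
    fix y assume y: "y \<in> P"
    show "y \<in> U"
    proof (rule ccontr)
      assume yU: "y \<notin> U"
      obtain x where x: "x \<in> C" using cls_two[OF CC] by blast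
      have "x \<in> id ` C" using x by simp
      then have xU: "x \<in> U" unfolding U_def using id_G by blast
      have xP: "x \<in> P" using x cls_sub CC by blast
      have "lt x \<noteq> {}"
      proof
        assume "lt x = {}"
        then show False using r_ge2[OF xP] by simp
      qed
      then obtain l0 where l0: "l0 \<in> L" "x \<in> l0" unfolding lt_def by blast
      define m where "m = card (l0 \<inter> U)"
      have meq: "card (l \<inter> U) = m" if "l \<in> L" for l
        using le[OF that l0(1)] le[OF l0(1) that] unfolding m_def by simp
      have m1: "1 \<le> m"
      proof -
        have "l0 \<inter> U \<noteq> {}" using l0 xU by blast
        then show ?thesis unfolding m_def using fin_line[OF l0(1)]
          by (simp add: Suc_leI card_gt_0_iff)
      qed
      have "card U = (\<Sum>l\<in>lt y. card (l \<inter> U))" using part[OF y UP yU] .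
      also have "\<dots> = (\<Sum>l\<in>lt y. m)"
        by (rule sum.cong) (auto simp: lt_def intro: meq)
      finally have e1: "card U = card (lt y) * m" by simp
      have "U - {x} \<subseteq> P" using UP by blast
      then have "card (U - {x}) = (\<Sum>l\<in>lt x. card (l \<inter> (U - {x})))" by (rule part[OF xP]) simp
      also have "\<dots> = (\<Sum>l\<in>lt x. m - 1)"
      proof (rule sum.cong)
        fix l assume "l \<in> lt x"
        then have l: "l \<in> L" "x \<in> l" unfolding lt_def by auto
        have "l \<inter> (U - {x}) = (l \<inter> U) - {x}" by blast
        then show "card (l \<inter> (U - {x})) = m - 1" using meq[OF l(1)] l xU fin_line[OF l(1)] by simp
      qed simp
      finally have e2': "card (U - {x}) = card (lt x) * (m - 1)" by simp
      have "card (U - {x}) = card U - 1" using xU finite_subset[OF UP finP] by simp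
      with e2' have e2: "card U - 1 = card (lt x) * (m - 1)" by simp
      have "card (lt x) = card (lt y)" using r_const xP y by blast
      with e2 have e3: "card U - 1 = card (lt y) * (m - 1)" by simp
      show False by (rule arith_r1[OF r_ge2[OF y] m1 e1 e3])
    qed
  qed
  obtain z where z: "z \<in> D" using cls_two[OF assms] by blast
  then have "z \<in> U" using PU cls_sub assms by blast
  then obtain g where g: "g \<in> G" "z \<in> g ` C" unfolding U_def by blast
  then have "g ` C = D" using cls_disj[OF g_cls[OF g(1) CC] assms] z by blast
  then show ?thesis using g by blast
qed

lemma transfer_C: assumes "D \<in> Cl" "l \<in> L" shows "\<exists>l'\<in>L. card (C \<inter> l') = card (D \<inter> l)"
proof -
  obtain g where g: "g \<in> G" "g ` C = D" using orbit assms by blast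
  define l' where "l' = inv g ` l"
  have l': "l' \<in> L" unfolding l'_def using g_line g_inv g assms by blast
  have "g ` l' = l" unfolding l'_def using g_surj[OF g(1)] by (simp add: image_f_inv_f)
  then have "g ` (C \<inter> l') = D \<inter> l" using img_int[OF g(1)] g by simp
  moreover have "card (g ` (C \<inter> l')) = card (C \<inter> l')" by (rule card_img[OF g(1)])
  ultimately have "card (C \<inter> l') = card (D \<inter> l)" by simp
  then show ?thesis using l' by blast
qed

lemma full_false: assumes "\<forall>l\<in>L. \<exists>D\<in>Cl. D \<subseteq> l" shows False
proof -
  define f where "f l = (SOME D. D \<in> Cl \<and> D \<subseteq> l)" for l
  have f: "f l \<in> Cl \<and> f l \<subseteq> l" if "l \<in> L" for l
  proof -
    have "\<exists>D. D \<in> Cl \<and> D \<subseteq> l" using assms that by blast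
    then show ?thesis unfolding f_def by (rule someI_ex)
  qed
  have "inj_on f L"
  proof
    fix l1 l2 assume l: "l1 \<in> L" "l2 \<in> L" "f l1 = f l2"
    obtain a b where "a \<in> f l1" "b \<in> f l1" "a \<noteq> b" using cls_two f l by blast
    moreover have "f l1 \<subseteq> l1" "f l2 \<subseteq> l2" using f l by auto
    ultimately show "l1 = l2" using line_uniq[of l1 l2 a b] l by auto
  qed
  moreover have "f ` L \<subseteq> Cl" using f by blast
  ultimately have "card L \<le> card Cl" by (rule card_inj_on_le[OF _ _ finCl])
  then have "card P \<le> d" using b_ge_v cd by simp
  moreover have "2 * d \<le> c * d" using c1 by simp
  ultimately show False using v_eq d1 by linarith
qed

lemma no1: assumes "2 \<le> h" "\<forall>l\<in>L. \<forall>D\<in>Cl. card (D \<inter> l) = 0 \<or> card (D \<inter> l) = h"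
  shows False
proof -
  obtain x where x: "x \<in> C" using cls_two[OF CC] by blast
  have xP: "x \<in> P" using x cls_sub CC by blast
  have hx: "card (C \<inter> l) = h" if "l \<in> L" "x \<in> l" for l
  proof -
    have "C \<inter> l \<noteq> {}" using x that by blast
    then have "card (C \<inter> l) \<noteq> 0" using fin_cls[OF CC] by simp
    then show ?thesis using assms(2)[rule_format, OF that(1) CC] by simp
  qed
  have "card (C - {x}) = (\<Sum>l\<in>lt x. card (l \<inter> (C - {x})))" using part[OF xP] cls_sub[OF CC] by blast
  also have "\<dots> = (\<Sum>l\<in>lt x. h - 1)"
  proof (rule sum.cong)
    fix l assume "l \<in> lt x"
    then have l: "l \<in> L" "x \<in> l" unfolding lt_def by auto
    have "l \<inter> (C - {x}) = (C \<inter> l) - {x}" by blast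
    then show "card (l \<inter> (C - {x})) = h - 1" using hx[OF l] l x fin_cls[OF CC] by simp
  qed simp
  finally have e1: "c - 1 = card (lt x) * (h - 1)" using x fin_cls[OF CC] cc CC by simp
  obtain D where D: "D \<in> Cl" "D \<noteq> C"
  proof -
    have "Cl \<noteq> {C}" using cd d1 by auto
    then show ?thesis using that CC by blast
  qed
  obtain y where y: "y \<in> D" using cls_two[OF D(1)] by blast
  have yP: "y \<in> P" using y cls_sub D by blast
  have "y \<noteq> x" using cls_disj[OF CC D(1)] x y D(2) by blast
  then obtain l where l: "l \<in> L" "x \<in> l" "y \<in> l" using line_exists xP yP by blast
  have "card (D \<inter> l) \<noteq> 0" using y l fin_cls[OF D(1)] by auto
  then have hD: "card (D \<inter> l) = h" using assms(2)[rule_format, OF l(1) D(1)] by simp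
  have "(C \<inter> l) \<inter> (D \<inter> l) = {}" using cls_disj[OF CC D(1)] D(2) by blast
  then have "card ((C \<inter> l) \<union> (D \<inter> l)) = card (C \<inter> l) + card (D \<inter> l)"
    using fin_cls CC D by (simp add: card_Un_disjoint)
  moreover have "card ((C \<inter> l) \<union> (D \<inter> l)) \<le> card l"
    using fin_line[OF l(1)] by (simp add: card_mono)
  ultimately have "2 * h \<le> k" using hx[OF l(1,2)] hD lk l by simp
  show False
    using arith_no1[OF r_ge_k[OF xP] assms(1) \<open>2 * h \<le> k\<close> e1 r_eq[OF xP] v_eq] c1 d1 by simp
qed

end


context LS2
begin

lemma hom_get:
  assumes "homogeneous t (induced_group G C) C" "S \<subseteq> C" "T \<subseteq> C" "card S = t" "card T = t"
  shows "\<exists>g\<in>G. g ` C = C \<and> g ` S = T"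
proof -
  obtain h where h: "h \<in> induced_group G C" "h ` S = T"
    using assms unfolding homogeneous_def by blast
  then obtain g where g: "g \<in> G" "g ` C = C" "h = restrict g C"
    unfolding induced_group_def by blast
  have "h ` S = g ` S" using g(3) assms(2) by (auto simp: restrict_def)
  then show ?thesis using g h by auto
qed

lemma homog2:
  assumes hom: "homogeneous 2 (induced_group G C) C" and l: "l1 \<in> L" "l2 \<in> L"
    and c1: "2 \<le> card (C \<inter> l1)" and c2: "2 \<le> card (C \<inter> l2)"
  shows "card (C \<inter> l1) = card (C \<inter> l2)"
proof -
  obtain a1 b1 where ab1: "a1 \<in> C \<inter> l1" "b1 \<in> C \<inter> l1" "a1 \<noteq> b1" using two_pts[OF c1] by blast
  obtain a2 b2 where ab2: "a2 \<in> C \<inter> l2" "b2 \<in> C \<inter> l2" "a2 \<noteq> b2" using two_pts[OF c2] by blast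
  obtain g where g: "g \<in> G" "g ` C = C" "g ` {a1, b1} = {a2, b2}"
    using hom_get[OF hom, of "{a1, b1}" "{a2, b2}"] ab1 ab2 by auto
  have "g ` l1 \<in> L" using g_line g l by blast
  moreover have "a2 \<in> g ` l1" "b2 \<in> g ` l1" using g(3) ab1 by blast+
  ultimately have "g ` l1 = l2" using line_uniq[of "g ` l1" l2 a2 b2] ab2 l by blast
  then have "g ` (C \<inter> l1) = C \<inter> l2" using img_int[OF g(1)] g(2) by simp
  moreover have "card (g ` (C \<inter> l1)) = card (C \<inter> l1)" by (rule card_img[OF g(1)])
  ultimately show ?thesis by simp
qed

lemma homog3:
  assumes hom: "homogeneous 3 (induced_group G C) C" and l: "l1 \<in> L"
    and c3: "3 \<le> card (C \<inter> l1)"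
  shows "C \<subseteq> l1"
proof -
  obtain S where S: "S \<subseteq> C \<inter> l1" "card S = 3" using obtain_subset_with_card_n[OF c3] by blast
  then have "2 \<le> card S" by simp
  then obtain a b where ab: "a \<in> S" "b \<in> S" "a \<noteq> b" using two_pts by blast
  show ?thesis
  proof
    fix w assume w: "w \<in> C"
    show "w \<in> l1"
    proof (cases "w = a \<or> w = b")
      case True then show ?thesis using ab S by blast
    next
      case False
      have aC: "a \<in> C" "b \<in> C" using ab S by auto
      have "card {a, b, w} = 3" using False ab by auto
      then obtain g where g: "g \<in> G" "g ` C = C" "g ` S = {a, b, w}"
        using hom_get[OF hom, of S "{a, b, w}"] S aC w by auto
      have "g ` l1 \<in> L" using g_line g l by blast
      moreover have "{a, b, w} \<subseteq> g ` l1" using g(3) S by blast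
      ultimately have "g ` l1 = l1" using line_uniq[of "g ` l1" l1 a b] ab S l by blast
      then show ?thesis using \<open>{a, b, w} \<subseteq> g ` l1\<close> by blast
    qed
  qed
qed

lemma C_line: "\<exists>l0\<in>L. 2 \<le> card (C \<inter> l0)"
proof -
  obtain a b where ab: "a \<in> C" "b \<in> C" "a \<noteq> b" using cls_two[OF CC] by blast
  then obtain l where l: "l \<in> L" "a \<in> l" "b \<in> l" using line_exists cls_sub[OF CC] by blast
  have "{a, b} \<subseteq> C \<inter> l" using ab l by blast
  then have "card {a, b} \<le> card (C \<inter> l)" using fin_cls[OF CC] by (simp add: card_mono)
  then have "2 \<le> card (C \<inter> l)" using ab by simp
  then show ?thesis using l(1) by blast
qed

lemma spec_main:
  assumes h2: "2 \<le> h" and l0: "l0 \<in> L" and h0: "card (C \<inter> l0) = h"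
    and hall: "\<forall>D\<in>Cl. \<forall>l\<in>L. 2 \<le> card (D \<inter> l) \<longrightarrow> card (D \<inter> l) = h"
  shows "\<forall>l\<in>L. spec Cl l = {1, h}"
proof
  fix l assume l: "l \<in> L"
  obtain D0 where D0: "D0 \<in> Cl" "card (D0 \<inter> l) = h" using transfer[OF l0 l CC] h0 by blast
  have hin: "h \<in> spec Cl l" unfolding spec_iff using D0 h2 by auto
  have one: "1 \<in> spec Cl l"
  proof (rule ccontr)
    assume n1: "1 \<notin> spec Cl l"
    have "\<forall>l'\<in>L. \<forall>D\<in>Cl. card (D \<inter> l') = 0 \<or> card (D \<inter> l') = h"
    proof (intro ballI)
      fix l' D assume l': "l' \<in> L" and D: "D \<in> Cl"
      have "card (D \<inter> l') \<noteq> 1"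
      proof
        assume "card (D \<inter> l') = 1"
        then obtain D' where D': "D' \<in> Cl" "card (D' \<inter> l) = 1" using transfer[OF l' l D] by auto
        have "1 \<in> spec Cl l" unfolding spec_iff using D' by auto
        then show False using n1 by blast
      qed
      then show "card (D \<inter> l') = 0 \<or> card (D \<inter> l') = h" using hall[rule_format, OF D l']
        by (cases "2 \<le> card (D \<inter> l')") auto
    qed
    then show False by (rule no1[OF h2])
  qed
  have "spec Cl l \<subseteq> {1, h}"
  proof
    fix i assume "i \<in> spec Cl l"
    then obtain D where D: "D \<in> Cl" "card (D \<inter> l) = i" "0 < i" unfolding spec_iff by auto
    then show "i \<in> {1, h}" using hall[rule_format, OF D(1) l] by (cases "2 \<le> i") auto
  qed
  moreover have "{1, h} \<subseteq> spec Cl l" using one hin by simp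
  ultimately show "spec Cl l = {1, h}" by (rule subset_antisym)
qed

lemma part_i:
  assumes hom: "homogeneous 3 (induced_group G C) C"
  shows "\<forall>l\<in>L. spec Cl l = {1, 2}"
proof -
  have le2: "card (D \<inter> l) \<le> 2" if D: "D \<in> Cl" and l: "l \<in> L" for D l
  proof (rule ccontr)
    assume "\<not> card (D \<inter> l) \<le> 2"
    moreover obtain l' where l'0: "l' \<in> L" "card (C \<inter> l') = card (D \<inter> l)" using transfer_C[OF D l] by blast
    ultimately have l': "l' \<in> L" "3 \<le> card (C \<inter> l')" by auto
    then have Cl': "C \<subseteq> l'" using homog3[OF hom] by blast
    have "\<exists>D'\<in>Cl. D' \<subseteq> l''" if l'': "l'' \<in> L" for l''
    proof -
      obtain D' where D': "D' \<in> Cl" "card (D' \<inter> l'') = card (C \<inter> l')"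
        using transfer[OF l'(1) l'' CC] by blast
      then have "card (D' \<inter> l'') = card D'" using Cl' cc CC by (simp add: Int_absorb2)
      then have "D' \<inter> l'' = D'" using fin_cls[OF D'(1)] by (meson Int_lower1 card_subset_eq)
      then show ?thesis using D' by blast
    qed
    then show False using full_false by blast
  qed
  obtain l0 where l0: "l0 \<in> L" "2 \<le> card (C \<inter> l0)" using C_line by blast
  have c2: "card (C \<inter> l0) = 2" using le2[OF CC l0(1)] l0(2) by simp
  have hall: "\<forall>D\<in>Cl. \<forall>l\<in>L. 2 \<le> card (D \<inter> l) \<longrightarrow> card (D \<inter> l) = 2"
    using le2 by (meson le_antisym)
  show ?thesis using spec_main[OF _ l0(1) c2 hall] by simp
qed

lemma part_ii:
  assumes hom: "homogeneous 2 (induced_group G C) C"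
  shows "\<exists>h\<ge>2. \<forall>l\<in>L. spec Cl l = {1, h}"
proof -
  obtain l0 where l0: "l0 \<in> L" "2 \<le> card (C \<inter> l0)" using C_line by blast
  have "\<forall>D\<in>Cl. \<forall>l\<in>L. 2 \<le> card (D \<inter> l) \<longrightarrow> card (D \<inter> l) = card (C \<inter> l0)"
  proof (intro ballI impI)
    fix D l assume D: "D \<in> Cl" and l: "l \<in> L" and two: "2 \<le> card (D \<inter> l)"
    obtain l' where l': "l' \<in> L" "card (C \<inter> l') = card (D \<inter> l)" using transfer_C[OF D l] by blast
    then show "card (D \<inter> l) = card (C \<inter> l0)" using homog2[OF hom l'(1) l0(1)] two l0 by simp
  qed
  then show ?thesis using spec_main[OF l0(2) l0(1) refl] l0 by blast
qed

end

theorem lemma5p2: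
  fixes P :: "'a set" and L :: "'a set set" and G :: "('a \<Rightarrow> 'a) set"
    and \<C> :: "'a set set" and v k c d :: nat and C :: "'a set"
  assumes "linear_space P L"
    and "card P = v"
    and "\<forall>l\<in>L. card l = k"
    and "2 < k" and "k < v"
    and "perm_group P G"
    and "\<forall>g\<in>G. automorphism P L g"
    and "line_transitive L G"
    and "is_partition P \<C>"
    and "G_invariant G \<C>"
    and "card \<C> = d" and "\<forall>C'\<in>\<C>. card C' = c"
    and "1 < c" and "1 < d"
    and "C \<in> \<C>"
  shows "(homogeneous 3 (induced_group G C) C \<longrightarrow> (\<forall>ln\<in>L. spec \<C> ln = {1, 2}))
       \<and> (homogeneous 2 (induced_group G C) C \<longrightarrow>
            (\<exists>h\<ge>2. \<forall>ln\<in>L. spec \<C> ln = {1, h}))"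
  proof -
  interpret LS2 P L k G \<C> C c d
    using assms by unfold_locales auto
  show ?thesis using part_i part_ii by blast
qed

end
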